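(* Assume $\theta_i<1$ for all $i$ and $\theta_j>0$ for some $j$. Then: (i) systems (A) and (B) have at least one equilibrium, and every equilibrium social power $x^*$ (i.e. every fixed point of $F$, equivalently the $x$-component of every equilibrium of (B)) satisfies: (a) $x^*\in\operatorname{int}\Delta_n$; (b) $x^*_i\ge 1/n$ for every $i\in\mathcal V_f$, and for $i\in\mathcal V_f$ one has $x^*_i=1/n$ if and only if $C_{ji}=0$ for all $j\in\mathcal V_p$; (c) $x^*_i>(1-\theta_i)/n$ for every $i\in\mathcal V_p$, and for $i\in\mathcal V_p$, if $C_{ji}=0$ for all $j\in\mathcal V_p$ then $x^*_i<1/n$; (d) $\max_i x^*_i<1/n+\theta_{\mathrm{ave}}$. (ii) If $\theta_{\max}<\dfrac{n}{n+2(1+\zeta)}$ with $\zeta=n\theta_{\mathrm{ave}}-\theta_{\min}$, then the equilibrium social power $x^*$ of systems (A) and (B) is unique.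
   Context: Let $n\ge 2$, $\mathbf 1_n$ the all-ones vector, $I_n$ the identity matrix, $\Delta_n=\{x\in\mathbb R^n: x\ge 0,\ \mathbf 1_n^Tx=1\}$, $\operatorname{int}\Delta_n=\{x\in\mathbb R^n: x>0,\ \mathbf 1_n^Tx=1\}$. Let $C\in\mathbb R^{n\times n}$ be a nonnegative row-stochastic matrix with zero diagonal, $\theta=(\theta_1,\dots,\theta_n)\in[0,1]^n$, $\Theta=\mathrm{diag}(\theta)$, and for $x\in\mathbb R^n$, $W(x)=\mathrm{diag}(x)+(I_n-\mathrm{diag}(x))C$. Let $\theta_{\min}=\min_j\theta_j$, $\theta_{\mathrm{ave}}=\frac1n\sum_j\theta_j$, $\theta_{\max}=\max_j\theta_j$. Let $\mathcal V_f=\{i:\theta_i=0\}$ (fully stubborn individuals) and $\mathcal V_p=\{i:\theta_i>0\}$ (partially stubborn individuals). System (A): $x(s+1)=F(x(s))$, $x(0)\in\Delta_n$, where $F(x)=(I_n-\Theta)(I_n-W(x)^T\Theta)^{-1}\mathbf 1_n/n$; an equilibrium is $x^*\in\Delta_n$ with $F(x^* )=x^*$. System (B): $V(k+1)=\Theta W(x(k))V(k)+I_n-\Theta$, $x(k+1)=V(k+1)^T\mathbf 1_n/n$, with $V(0)=I_n$, $x(0)\in\Delta_n$; an equilibrium is a pair $(V^*,x^* )$ with $V^*$ row-stochastic, $x^*\in\Delta_n$, $V^*=\Theta W(x^* )V^*+I_n-\Theta$, $x^*=(V^* )^T\mathbf 1_n/n$; $x^*$ is then called its equilibrium social power. *)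

theory Defs
  imports "HOL-Analysis.Analysis"
begin

definition diag_mat :: "real^'n \<Rightarrow> real^'n^'n" where
  "diag_mat v = (\<chi> i j. if i = j then v $ i else 0)"

definition ones_vec :: "real^'n" where
  "ones_vec = (\<chi> i. 1)"

definition row_stochastic :: "real^'n^'n \<Rightarrow> bool" where
  "row_stochastic A \<longleftrightarrow> (\<forall>i j. A $ i $ j \<ge> 0) \<and> (\<forall>i. (\<Sum>j\<in>UNIV. A $ i $ j) = 1)"

definition zero_diag :: "real^'n^'n \<Rightarrow> bool" where
  "zero_diag A \<longleftrightarrow> (\<forall>i. A $ i $ i = 0)"

definition std_simplex :: "(real^'n) set" where
  "std_simplex = {x. (\<forall>i. x $ i \<ge> 0) \<and> (\<Sum>i\<in>UNIV. x $ i) = 1}"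

definition int_std_simplex :: "(real^'n) set" where
  "int_std_simplex = {x. (\<forall>i. x $ i > 0) \<and> (\<Sum>i\<in>UNIV. x $ i) = 1}"

definition Wmat :: "real^'n^'n \<Rightarrow> real^'n \<Rightarrow> real^'n^'n" where
  "Wmat C x = diag_mat x + (mat 1 - diag_mat x) ** C"

definition Fmap :: "real^'n^'n \<Rightarrow> real^'n \<Rightarrow> real^'n \<Rightarrow> real^'n" where
  "Fmap C \<theta> x = (mat 1 - diag_mat \<theta>) *v
      (matrix_inv (mat 1 - transpose (Wmat C x) ** diag_mat \<theta>) *v
        ((1 / real CARD('n)) *\<^sub>R ones_vec))"

definition equilibrium_A :: "real^'n^'n \<Rightarrow> real^'n \<Rightarrow> real^'n \<Rightarrow> bool" where
  "equilibrium_A C \<theta> x \<longleftrightarrow> x \<in> std_simplex \<and> Fmap C \<theta> x = x"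

definition equilibrium_B :: "real^'n^'n \<Rightarrow> real^'n \<Rightarrow> real^'n^'n \<Rightarrow> real^'n \<Rightarrow> bool" where
  "equilibrium_B C \<theta> V x \<longleftrightarrow> row_stochastic V \<and> x \<in> std_simplex \<and>
     V = diag_mat \<theta> ** Wmat C x ** V + mat 1 - diag_mat \<theta> \<and>
     x = transpose V *v ((1 / real CARD('n)) *\<^sub>R ones_vec)"

definition theta_min :: "real^'n \<Rightarrow> real" where
  "theta_min \<theta> = Min (range (\<lambda>j. \<theta> $ j))"
definition theta_max :: "real^'n \<Rightarrow> real" where
  "theta_max \<theta> = Max (range (\<lambda>j. \<theta> $ j))"
definition theta_ave :: "real^'n \<Rightarrow> real" where
  "theta_ave \<theta> = (\<Sum>j\<in>UNIV. \<theta> $ j) / real CARD('n)"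

definition eq_power_props :: "real^'n^'n \<Rightarrow> real^'n \<Rightarrow> real^'n \<Rightarrow> bool" where
  "eq_power_props C \<theta> x \<longleftrightarrow>
     x \<in> int_std_simplex \<and>
     (\<forall>i. \<theta> $ i = 0 \<longrightarrow>
        x $ i \<ge> 1 / real CARD('n) \<and>
        (x $ i = 1 / real CARD('n) \<longleftrightarrow> (\<forall>j. \<theta> $ j > 0 \<longrightarrow> C $ j $ i = 0))) \<and>
     (\<forall>i. \<theta> $ i > 0 \<longrightarrow>
        x $ i > (1 - \<theta> $ i) / real CARD('n) \<and>
        ((\<forall>j. \<theta> $ j > 0 \<longrightarrow> C $ j $ i = 0) \<longrightarrow> x $ i < 1 / real CARD('n))) \<and>
     Max (range (\<lambda>i. x $ i)) < 1 / real CARD('n) + theta_ave \<theta>"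

end

theory Submission
  imports Defs
begin

declare transpose_matrix_vector[simp del]

lemma diag_mult_entry: "(diag_mat v ** A) $ i $ j = v$i * A$i$j"
  by (simp add: diag_mat_def matrix_matrix_mult_def if_distrib[of "\<lambda>t. t * _"] sum.delta cong: if_cong)

lemma mult_diag_entry: "(A ** diag_mat v) $ i $ j = A$i$j * v$j"
proof -
  have "(A ** diag_mat v) $ i $ j = (\<Sum>k\<in>UNIV. A$i$k * (if k = j then v$k else 0))"
    by (simp add: diag_mat_def matrix_matrix_mult_def)
  also have "\<dots> = (\<Sum>k\<in>UNIV. if k = j then A$i$k * v$k else 0)" by (rule sum.cong) auto
  also have "\<dots> = A$i$j * v$j" by simp
  finally show ?thesis .
qed

lemma one_minus_diag: "mat 1 - diag_mat x = diag_mat (\<chi> i. 1 - x$i)"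
  by (simp add: vec_eq_iff diag_mat_def mat_def)

lemma W_entry: "Wmat C x $ i $ j = (if i = j then x$i else 0) + (1 - x$i) * C$i$j"
  by (simp add: Wmat_def one_minus_diag diag_mult_entry) (simp add: diag_mat_def)

lemma mv_entry: "(A *v v) $ i = (\<Sum>j\<in>UNIV. A$i$j * v$j)"
  by (simp add: matrix_vector_mult_def)

lemma W_rowsum: assumes "row_stochastic C" shows "(\<Sum>k\<in>UNIV. Wmat C x $ j $ k) = 1"
proof -
  have "(\<Sum>k\<in>UNIV. Wmat C x $ j $ k) = (\<Sum>k\<in>UNIV. (if j = k then x$j else 0)) + (1 - x$j) * (\<Sum>k\<in>UNIV. C$j$k)"
    by (simp add: W_entry sum.distrib sum_distrib_left)
  also have "\<dots> = 1" using assms by (simp add: row_stochastic_def)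
  finally show ?thesis .
qed

lemma W_nonneg: assumes "row_stochastic C" "0 \<le> x$j" "x$j \<le> 1" shows "0 \<le> Wmat C x $ j $ k"
  using assms by (auto simp: W_entry row_stochastic_def)

lemma simplex_le1: assumes "x \<in> std_simplex" shows "0 \<le> x$j" "x$j \<le> 1"
proof -
  show "0 \<le> x$j" using assms by (simp add: std_simplex_def)
  have "x$j \<le> (\<Sum>i\<in>UNIV. x$i)" by (rule member_le_sum) (use assms in \<open>auto simp: std_simplex_def\<close>)
  then show "x$j \<le> 1" using assms by (simp add: std_simplex_def)
qed

lemma maxprin:
  fixes M :: "real^'n^'n" and v b :: "real^'n"
  assumes M0: "\<forall>j k. 0 \<le> M$j$k" and Ms: "\<forall>j. (\<Sum>k\<in>UNIV. M$j$k) < 1"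
    and eq: "\<forall>j. v$j = (\<Sum>k\<in>UNIV. M$j$k * v$k) + b$j" and b0: "\<forall>j. 0 \<le> b$j"
  shows "0 \<le> v$j"
proof -
  have "Min (range (\<lambda>j. v$j)) \<in> range (\<lambda>j. v$j)" by (rule Min_in) auto
  then obtain j0 where j0: "v$j0 = Min (range (\<lambda>j. v$j))" by (metis rangeE)
  have le: "v$j0 \<le> v$k" for k unfolding j0 by (rule Min_le) auto
  show ?thesis
  proof (rule ccontr)
    assume "\<not> 0 \<le> v$j"
    then have neg: "v$j0 < 0" using le[of j] by simp
    have "(\<Sum>k\<in>UNIV. M$j0$k * v$j0) \<le> (\<Sum>k\<in>UNIV. M$j0$k * v$k)"
      by (rule sum_mono) (simp add: M0 le mult_left_mono)
    moreover have "(\<Sum>k\<in>UNIV. M$j0$k * v$j0) = (\<Sum>k\<in>UNIV. M$j0$k) * v$j0" by (simp add: sum_distrib_right)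
    ultimately have "(\<Sum>k\<in>UNIV. M$j0$k) * v$j0 \<le> v$j0 - b$j0" using eq[rule_format, of j0] by linarith
    then have "(\<Sum>k\<in>UNIV. M$j0$k) * v$j0 \<le> v$j0" using b0[rule_format, of j0] by linarith
    moreover have "(\<Sum>k\<in>UNIV. M$j0$k) * v$j0 > 1 * v$j0" using Ms neg
      by (intro mult_strict_right_mono_neg) auto
    ultimately show False by simp
  qed
qed


lemma inv_props: assumes "invertible (A::real^'n^'n)"
  shows "A ** matrix_inv A = mat 1" "matrix_inv A ** A = mat 1"
proof -
  have "A ** matrix_inv A = mat 1 \<and> matrix_inv A ** A = mat 1"
    unfolding matrix_inv_def by (rule someI_ex) (use assms in \<open>simp add: invertible_def\<close>)
  then show "A ** matrix_inv A = mat 1" "matrix_inv A ** A = mat 1" by auto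
qed

lemma tmv_entry: "(transpose A *v v) $ i = (\<Sum>j\<in>UNIV. A$j$i * v$j)"
  unfolding matrix_vector_mult_def transpose_def by simp

lemma mat1_entry: "(mat 1 :: real^'n^'n) $ i $ j = (if i = j then 1 else 0)"
  by (simp add: mat_def)

lemma matrix_diff_rdistrib: "((A::real^'n^'n) - B) ** V = A ** V - B ** V"
  by (simp add: matrix_matrix_mult_def vec_eq_iff algebra_simps sum_subtractf)

definition Mm :: "real^'n^'n \<Rightarrow> real^'n \<Rightarrow> real^'n \<Rightarrow> real^'n^'n" where
  "Mm C \<theta> x = diag_mat \<theta> ** Wmat C x"

lemma Mm_entry: "Mm C \<theta> x $ j $ k = \<theta>$j * Wmat C x $ j $ k"
  by (simp add: Mm_def diag_mult_entry)

locale sp =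
  fixes C :: "real^'n^'n" and \<theta> :: "real^'n"
  assumes n2: "CARD('n) \<ge> 2"
    and C_rs: "row_stochastic C" and C_zd: "zero_diag C"
    and \<theta>_ge: "\<forall>i. 0 \<le> \<theta> $ i" and \<theta>_lt: "\<forall>i. \<theta> $ i < 1"
begin

abbreviation "M x \<equiv> Mm C \<theta> x"
abbreviation "W x \<equiv> Wmat C x"


lemma C_nonneg: "0 \<le> C$i$j" using C_rs by (simp add: row_stochastic_def)
lemma C_rowsum: "(\<Sum>j\<in>UNIV. C$i$j) = 1" using C_rs by (simp add: row_stochastic_def)

lemma M_nonneg: assumes "x \<in> std_simplex" shows "0 \<le> M x $ j $ k"
  using W_nonneg[OF C_rs simplex_le1[OF assms]] \<theta>_ge by (simp add: Mm_entry)

lemma M_rowsum: "(\<Sum>k\<in>UNIV. M x $ j $ k) = \<theta>$j"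
  by (simp add: Mm_entry flip: sum_distrib_left) (simp add: W_rowsum[OF C_rs])

lemma M_rowsum_lt: "\<forall>j. (\<Sum>k\<in>UNIV. M x $ j $ k) < 1"
  using \<theta>_lt by (simp add: M_rowsum)

definition csol :: "real^'n \<Rightarrow> real^'n \<Rightarrow> real^'n \<Rightarrow> bool" where
  "csol x r c \<longleftrightarrow> (\<forall>j. c$j = (\<Sum>k\<in>UNIV. M x $ j $ k * c$k) + r$j)"

lemma csol_entry: "((mat 1 - M x) *v c)$j = c$j - (\<Sum>k\<in>UNIV. M x $ j $ k * c$k)"
  by (simp add: matrix_vector_mult_diff_rdistrib mv_entry)

lemma csol_iff: "csol x r c \<longleftrightarrow> (mat 1 - M x) *v c = r"
  unfolding csol_def vec_eq_iff csol_entry by (simp add: algebra_simps)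

lemma csol_nonneg: assumes "x \<in> std_simplex" "csol x r c" "\<forall>j. 0 \<le> r$j" shows "0 \<le> c$j"
proof -
  have m0: "\<forall>j k. 0 \<le> M x $ j $ k" using M_nonneg[OF assms(1)] by blast
  show ?thesis by (rule maxprin[OF m0 M_rowsum_lt assms(2)[unfolded csol_def] assms(3)])
qed

lemma IM_inj: assumes "x \<in> std_simplex" "(mat 1 - M x) *v v = 0" shows "v = 0"
proof -
  have c1: "csol x 0 v" using assms(2) by (simp add: csol_iff)
  have "(mat 1 - M x) *v (-v) = - ((mat 1 - M x) *v v)" by (simp add: vec_eq_iff mv_entry sum_negf)
  then have "(mat 1 - M x) *v (-v) = 0" using assms(2) by simp
  then have c2: "csol x 0 (-v)" by (simp add: csol_iff)
  have "0 \<le> v$j" for j using csol_nonneg[OF assms(1) c1] by simp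
  moreover have "0 \<le> (-v)$j" for j using csol_nonneg[OF assms(1) c2] by simp
  ultimately have "v$j = 0" for j by (metis antisym neg_0_le_iff_le vector_uminus_component)
  then show ?thesis by (simp add: vec_eq_iff)
qed

lemma IM_invertible: assumes "x \<in> std_simplex" shows "invertible (mat 1 - M x)"
  unfolding invertible_left_inverse matrix_left_invertible_ker using IM_inj[OF assms] by blast

lemma IMT_invertible: assumes "x \<in> std_simplex" shows "invertible (transpose (mat 1 - M x))"
  by (rule transpose_invertible[OF IM_invertible[OF assms]])

lemma csol_exists: assumes "x \<in> std_simplex" shows "csol x r (matrix_inv (mat 1 - M x) *v r)"
  unfolding csol_iff matrix_vector_mul_assoc inv_props(1)[OF IM_invertible[OF assms]] by simp

lemma csol_unique: assumes "x \<in> std_simplex" "csol x r c" "csol x r d" shows "c = d"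
proof -
  have "(mat 1 - M x) *v (c - d) = 0" using assms(2,3)
    by (simp add: csol_iff matrix_vector_mult_diff_distrib)
  then have "c - d = 0" by (rule IM_inj[OF assms(1)])
  then show ?thesis by simp
qed


definition bvec :: "real^'n" where "bvec = (1 / real CARD('n)) *\<^sub>R ones_vec"
lemma bvec_entry: "bvec $ j = 1 / real CARD('n)" by (simp add: bvec_def ones_vec_def)

lemma duality: assumes "transpose (mat 1 - M x) *v y = bvec" "csol x r c"
  shows "(\<Sum>j\<in>UNIV. r$j * y$j) = (\<Sum>j\<in>UNIV. c$j) / real CARD('n)"
proof -
  let ?A = "mat 1 - M x"
  have "(\<Sum>j\<in>UNIV. c$j) / real CARD('n) = (\<Sum>j\<in>UNIV. c$j * (transpose ?A *v y)$j)"
    using assms(1) by (simp add: bvec_entry sum_divide_distrib)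
  also have "\<dots> = (\<Sum>j\<in>UNIV. \<Sum>k\<in>UNIV. c$j * ?A$k$j * y$k)"
    by (simp add: tmv_entry sum_distrib_left mult.assoc)
  also have "\<dots> = (\<Sum>k\<in>UNIV. \<Sum>j\<in>UNIV. c$j * ?A$k$j * y$k)" by (rule sum.swap)
  also have "\<dots> = (\<Sum>k\<in>UNIV. y$k * (?A *v c)$k)"
    by (simp add: mv_entry sum_distrib_left mult_ac)
  also have "\<dots> = (\<Sum>k\<in>UNIV. r$k * y$k)" using assms(2) by (simp add: csol_iff mult.commute)
  finally show ?thesis by simp
qed

lemma csol_ones: "csol x (\<chi> j. 1 - \<theta>$j) ones_vec"
  by (simp add: csol_def ones_vec_def M_rowsum)

lemma ysum: assumes "transpose (mat 1 - M x) *v y = bvec"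
  shows "(\<Sum>j\<in>UNIV. (1 - \<theta>$j) * y$j) = 1"
  using duality[OF assms csol_ones] by (simp add: ones_vec_def)

definition evec :: "'n \<Rightarrow> real^'n" where "evec i = (\<chi> j. if j = i then 1 - \<theta>$i else 0)"

lemma ycomp: assumes "transpose (mat 1 - M x) *v y = bvec" "csol x (evec i) c"
  shows "(1 - \<theta>$i) * y$i = (\<Sum>j\<in>UNIV. c$j) / real CARD('n)"
proof -
  have "(\<Sum>j\<in>UNIV. evec i $ j * y$j) = (\<Sum>j\<in>UNIV. if j = i then (1 - \<theta>$i) * y$i else 0)"
    by (rule sum.cong) (auto simp: evec_def)
  then show ?thesis using duality[OF assms] by simp
qed

definition eqs :: "real^'n \<Rightarrow> bool" where
  "eqs x \<longleftrightarrow> x \<in> std_simplex \<and> transpose (mat 1 - M x) *v (\<chi> j. x$j / (1 - \<theta>$j)) = bvec"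

lemma diag_mv_entry: "(diag_mat v *v y) $ j = v$j * y$j"
proof -
  have "(diag_mat v *v y) $ j = (\<Sum>k\<in>UNIV. if k = j then v$j * y$j else 0)"
    unfolding mv_entry diag_mat_def by (rule sum.cong) auto
  then show ?thesis by simp
qed

lemma from_inv: assumes "x \<in> std_simplex"
  and "x = (mat 1 - diag_mat \<theta>) *v (matrix_inv (transpose (mat 1 - M x)) *v bvec)"
  shows "eqs x"
proof -
  define y where "y = matrix_inv (transpose (mat 1 - M x)) *v bvec"
  have Ay: "transpose (mat 1 - M x) *v y = bvec"
    unfolding y_def matrix_vector_mul_assoc inv_props(1)[OF IMT_invertible[OF assms(1)]] by simp
  have "x$j = (1 - \<theta>$j) * y$j" for j
    using arg_cong[OF assms(2)[folded y_def], of "\<lambda>v. v$j"] by (simp add: one_minus_diag diag_mv_entry)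
  then have "(\<chi> j. x$j / (1 - \<theta>$j)) = y" using \<theta>_lt by (simp add: vec_eq_iff) (metis less_irrefl nonzero_mult_div_cancel_left right_minus_eq)
  then show ?thesis using Ay assms(1) by (simp add: eqs_def)
qed

lemma trans_eq: "mat 1 - transpose (W x) ** diag_mat \<theta> = transpose (mat 1 - M x)"
  by (simp add: vec_eq_iff transpose_def mult_diag_entry Mm_entry mat1_entry mult.commute)

lemma Fmap_alt: "Fmap C \<theta> x = (mat 1 - diag_mat \<theta>) *v (matrix_inv (transpose (mat 1 - M x)) *v bvec)"
  by (simp add: Fmap_def trans_eq bvec_def)

lemma eqA_eqs: assumes "equilibrium_A C \<theta> x" shows "eqs x"
  using assms from_inv by (simp add: equilibrium_A_def Fmap_alt)

lemma transpose_ID: "transpose (mat 1 - diag_mat \<theta>) = mat 1 - diag_mat \<theta>"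
  by (simp add: vec_eq_iff transpose_def diag_mat_def mat_def)

lemma eqB_eqs: assumes "equilibrium_B C \<theta> V x" shows "eqs x"
proof -
  have xs: "x \<in> std_simplex" using assms unfolding equilibrium_B_def by blast
  have Veq: "V = M x ** V + mat 1 - diag_mat \<theta>" using assms unfolding equilibrium_B_def Mm_def by blast
  have xV: "x = transpose V *v bvec" using assms unfolding equilibrium_B_def bvec_def by blast
  have e2: "V - M x ** V = mat 1 - diag_mat \<theta>" by (subst (1) Veq) (simp add: algebra_simps)
  have "(mat 1 - M x) ** V = mat 1 - diag_mat \<theta>" using e2 by (simp add: matrix_diff_rdistrib)
  then have "transpose ((mat 1 - M x) ** V) = transpose (mat 1 - diag_mat \<theta>)" by simp
  then have VT: "transpose V ** transpose (mat 1 - M x) = mat 1 - diag_mat \<theta>"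
    by (simp add: matrix_transpose_mul transpose_ID)
  let ?A = "transpose (mat 1 - M x)"
  have "transpose V = transpose V ** (?A ** matrix_inv ?A)"
    by (simp add: inv_props(1)[OF IMT_invertible[OF xs]])
  also have "\<dots> = (mat 1 - diag_mat \<theta>) ** matrix_inv ?A" by (simp add: matrix_mul_assoc VT)
  finally have "x = (mat 1 - diag_mat \<theta>) *v (matrix_inv ?A *v bvec)"
    using xV by (simp add: matrix_vector_mul_assoc)
  then show ?thesis using from_inv xs by blast
qed


lemma th1: "0 < 1 - \<theta>$j" using \<theta>_lt by (simp add: less_iff_diff_less_0[symmetric])  

lemma csol_diff: "csol x r c \<Longrightarrow> csol x r' c' \<Longrightarrow> csol x (r - r') (c - c')"
  by (simp add: csol_iff matrix_vector_mult_diff_distrib)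

lemma cvec: assumes "eqs x"
  obtains c where "csol x (evec i) c" "\<forall>j. 0 \<le> c$j" "\<forall>j. c$j \<le> 1"
    "x$i = (\<Sum>j\<in>UNIV. c$j) / real CARD('n)"
proof -
  have xs: "x \<in> std_simplex" using assms by (simp add: eqs_def)
  define c where "c = matrix_inv (mat 1 - M x) *v evec i"
  have cs: "csol x (evec i) c" unfolding c_def by (rule csol_exists[OF xs])
  have c0: "\<forall>j. 0 \<le> c$j" using csol_nonneg[OF xs cs] \<theta>_lt by (auto simp: evec_def less_imp_le)
  have "csol x ((\<chi> j. 1 - \<theta>$j) - evec i) (ones_vec - c)" by (rule csol_diff[OF csol_ones cs])
  then have "0 \<le> (ones_vec - c)$j" for j
    by (rule csol_nonneg[OF xs]) (use \<theta>_lt in \<open>auto simp: evec_def less_imp_le\<close>)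
  then have c1: "\<forall>j. c$j \<le> 1" by (simp add: ones_vec_def)
  have "(1 - \<theta>$i) * (\<chi> j. x$j / (1 - \<theta>$j)) $ i = (\<Sum>j\<in>UNIV. c$j) / real CARD('n)"
    by (rule ycomp[OF _ cs]) (use assms in \<open>simp add: eqs_def\<close>)
  then have "x$i = (\<Sum>j\<in>UNIV. c$j) / real CARD('n)" using th1[of i] by simp
  then show ?thesis using that cs c0 c1 by blast
qed

lemma sum_delta_sub: "(\<Sum>k\<in>UNIV. (mat 1 - A) $ k $ i * f k) = f i - (\<Sum>k\<in>UNIV. A$k$i * f k)"
  for A :: "real^'n^'n"
proof -
  have "(\<Sum>k\<in>UNIV. (mat 1 - A) $ k $ i * f k) = (\<Sum>k\<in>UNIV. (if k = i then f k else 0) - A$k$i * f k)"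
    by (rule sum.cong) (auto simp: mat1_entry left_diff_distrib)
  then show ?thesis by (simp add: sum_subtractf)
qed

lemma eqs_entry: assumes "eqs x"
  shows "x$i / (1 - \<theta>$i) = (\<Sum>k\<in>UNIV. \<theta>$k * W x $ k $ i * (x$k / (1 - \<theta>$k))) + 1 / real CARD('n)"
proof -
  define f where "f k = x$k / (1 - \<theta>$k)" for k
  have "(transpose (mat 1 - M x) *v (\<chi> j. f j)) $ i = bvec $ i"
    using assms by (simp add: eqs_def f_def)
  then have "(\<Sum>k\<in>UNIV. (mat 1 - M x) $ k $ i * f k) = 1 / real CARD('n)"
    by (simp add: tmv_entry bvec_entry)
  then have "f i - (\<Sum>k\<in>UNIV. \<theta>$k * W x $ k $ i * f k) = 1 / real CARD('n)"
    by (simp only: sum_delta_sub Mm_entry)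
  then show ?thesis by (simp add: f_def)
qed

lemma term_nonneg: assumes "x \<in> std_simplex" shows "0 \<le> \<theta>$k * W x $ k $ i * (x$k / (1 - \<theta>$k))"
  using \<theta>_ge W_nonneg[OF C_rs simplex_le1[OF assms]] simplex_le1[OF assms] th1[of k] by simp

lemma eqs_pos: assumes "eqs x" shows "x$i \<ge> (1 - \<theta>$i) / real CARD('n)" "x$i > 0"
proof -
  have xs: "x \<in> std_simplex" using assms by (simp add: eqs_def)
  have "0 \<le> (\<Sum>k\<in>UNIV. \<theta>$k * W x $ k $ i * (x$k / (1 - \<theta>$k)))"
    by (rule sum_nonneg) (rule term_nonneg[OF xs])
  then have "x$i / (1 - \<theta>$i) \<ge> 1 / real CARD('n)" using eqs_entry[OF assms, of i] by simp
  then show "x$i \<ge> (1 - \<theta>$i) / real CARD('n)" using th1[of i] by (simp add: field_simps)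
  moreover have "(1 - \<theta>$i) / real CARD('n) > 0" using th1[of i] by simp
  ultimately show "x$i > 0" by linarith
qed

lemma two_le_sum: assumes "x \<in> std_simplex" "k \<noteq> l" shows "x$k + x$l \<le> 1"
proof -
  have "(\<Sum>j\<in>{k,l}. x$j) \<le> (\<Sum>j\<in>UNIV. x$j)"
    by (rule sum_mono2) (use assms in \<open>auto simp: std_simplex_def\<close>)
  then show ?thesis using assms by (simp add: std_simplex_def)
qed

lemma eqs_lt1: assumes "eqs x" shows "x$k < 1"
proof -
  have "\<exists>l. l \<noteq> k"
  proof (rule ccontr)
    assume "\<not> (\<exists>l. l \<noteq> k)" then have "(UNIV::'n set) = {k}" by auto
    then show False using n2 by (metis card.empty card_insert_disjoint empty_iff finite.emptyI numeral_le_one_iff semiring_norm(69) One_nat_def)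
  qed
  then obtain l where "l \<noteq> k" by blast
  then show ?thesis using two_le_sum[of x k l] eqs_pos(2)[OF assms, of l] assms by (simp add: eqs_def)
qed


lemma W_diag: "W x $ i $ i = x$i" using C_zd by (simp add: W_entry zero_diag_def)
lemma W_off: "k \<noteq> i \<Longrightarrow> W x $ k $ i = (1 - x$k) * C$k$i" by (simp add: W_entry)

lemma alg1: fixes t a xx n :: real assumes h1: "(1-t)*a = xx" and h2: "a = t*xx*a + 1/n"
  shows "xx = t*xx*xx + (1-t)/n"
proof -
  have "xx = (1-t)*a" using h1 by simp
  also have "\<dots> = (1-t)*(t*xx*a + 1/n)" using h2 by (rule arg_cong[of _ _ "\<lambda>z. (1-t)*z"])
  also have "\<dots> = t*xx*((1-t)*a) + (1-t)/n" by (simp add: algebra_simps)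
  also have "\<dots> = t*xx*xx + (1-t)/n" using h1 by simp
  finally show ?thesis .
qed

lemma prop_a: assumes "eqs x" shows "x \<in> int_std_simplex"
  using assms eqs_pos(2)[OF assms] by (simp add: eqs_def std_simplex_def int_std_simplex_def)

lemma prop_b: assumes "eqs x" "\<theta>$i = 0"
  shows "x$i \<ge> 1 / real CARD('n) \<and> (x$i = 1 / real CARD('n) \<longleftrightarrow> (\<forall>j. \<theta>$j > 0 \<longrightarrow> C$j$i = 0))"
proof -
  have xs: "x \<in> std_simplex" using assms by (simp add: eqs_def)
  let ?f = "\<lambda>k. \<theta>$k * W x $ k $ i * (x$k / (1 - \<theta>$k))"
  have e: "x$i = sum ?f UNIV + 1 / real CARD('n)" using eqs_entry[OF assms(1), of i] assms(2) by simp
  have f0: "0 \<le> sum ?f UNIV" by (rule sum_nonneg) (rule term_nonneg[OF xs])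
  have "sum ?f UNIV = 0 \<longleftrightarrow> (\<forall>k. ?f k = 0)"
    using term_nonneg[OF xs] by (intro sum_nonneg_eq_0_iff[THEN trans]) auto
  also have "\<dots> \<longleftrightarrow> (\<forall>j. \<theta>$j > 0 \<longrightarrow> C$j$i = 0)"
  proof -
    have "?f k = 0 \<longleftrightarrow> (\<theta>$k > 0 \<longrightarrow> C$k$i = 0)" for k
    proof (cases "k = i")
      case True then show ?thesis using assms(2) by simp
    next
      case False
      have "x$k > 0" "x$k < 1" "1 - \<theta>$k > 0" using eqs_pos(2)[OF assms(1)] eqs_lt1[OF assms(1)] th1 by auto
      then show ?thesis using False \<theta>_ge[rule_format, of k] by (auto simp: W_off)
    qed
    then show ?thesis by auto
  qed
  finally show ?thesis using e f0 by auto
qed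

lemma prop_c: assumes "eqs x" "\<theta>$i > 0"
  shows "x$i > (1 - \<theta>$i) / real CARD('n) \<and>
        ((\<forall>j. \<theta>$j > 0 \<longrightarrow> C$j$i = 0) \<longrightarrow> x$i < 1 / real CARD('n))"
proof -
  have xs: "x \<in> std_simplex" using assms by (simp add: eqs_def)
  let ?f = "\<lambda>k. \<theta>$k * W x $ k $ i * (x$k / (1 - \<theta>$k))"
  have e: "x$i / (1 - \<theta>$i) = sum ?f UNIV + 1 / real CARD('n)" using eqs_entry[OF assms(1), of i] by simp
  have xi: "x$i > 0" "x$i < 1" using eqs_pos(2)[OF assms(1)] eqs_lt1[OF assms(1)] by auto
  have t: "1 - \<theta>$i > 0" by (rule th1)
  have fi: "?f i = \<theta>$i * x$i * (x$i / (1 - \<theta>$i))" by (simp add: W_diag)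
  have "?f i \<le> sum ?f UNIV" by (rule member_le_sum) (simp, use term_nonneg[OF xs] in blast, simp)
  moreover have "?f i > 0" using fi xi t assms(2) by simp
  ultimately have "x$i / (1 - \<theta>$i) > 1 / real CARD('n)" using e by linarith
  then have A: "x$i > (1 - \<theta>$i) / real CARD('n)" using t by (simp add: field_simps)
  have B: "x$i < 1 / real CARD('n)" if H: "\<forall>j. \<theta>$j > 0 \<longrightarrow> C$j$i = 0"
  proof -
    have "sum ?f UNIV = (\<Sum>k\<in>UNIV. if k = i then ?f i else 0)"
    proof (rule sum.cong)
      fix k :: 'n assume "k \<in> UNIV"
      show "?f k = (if k = i then ?f i else 0)"
      proof (cases "k = i")
        case False
        then show ?thesis using H \<theta>_ge[rule_format, of k] by (cases "\<theta>$k > 0") (auto simp: W_off)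
      qed simp
    qed simp
    then have "x$i / (1 - \<theta>$i) = \<theta>$i * x$i * (x$i / (1 - \<theta>$i)) + 1 / real CARD('n)" using e fi by simp
    then have E: "x$i = \<theta>$i * x$i * x$i + (1 - \<theta>$i) / real CARD('n)"
      by (rule alg1[rotated]) (use t in simp)
    have "\<theta>$i * x$i * x$i < \<theta>$i * x$i" using xi assms(2) by simp
    then have "x$i * (1 - \<theta>$i) < (1 - \<theta>$i) / real CARD('n)" using E by (simp add: algebra_simps)
    then have "x$i * (1 - \<theta>$i) < (1 / real CARD('n)) * (1 - \<theta>$i)" by simp
    then show ?thesis using t by (meson mult_less_cancel_right_pos)
  qed
  show ?thesis using A B by blast
qed

lemma c_bound: assumes "eqs x" "csol x (evec i) c" "\<forall>j. 0 \<le> c$j" "\<forall>j. c$j \<le> 1"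
  shows "c$j \<le> \<theta>$j + evec i $ j"
proof (cases "j = i")
  case True then show ?thesis using assms(4) by (simp add: evec_def)
next
  case False
  have xs: "x \<in> std_simplex" using assms by (simp add: eqs_def)
  have "c$j = (\<Sum>k\<in>UNIV. M x $ j $ k * c$k) + evec i $ j" using assms(2) unfolding csol_def by blast
  then have "c$j = (\<Sum>k\<in>UNIV. M x $ j $ k * c$k)" using False by (simp add: evec_def)
  also have "\<dots> \<le> (\<Sum>k\<in>UNIV. M x $ j $ k)"
    by (rule sum_mono) (use assms(4) M_nonneg[OF xs] in \<open>auto intro: mult_left_le\<close>)
  finally show ?thesis using False by (simp add: M_rowsum evec_def)
qed

lemma c_strict: assumes "eqs x" "csol x (evec i) c" "\<forall>j. 0 \<le> c$j" "\<forall>j. c$j \<le> 1"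
  and "j \<noteq> i" "\<theta>$j > 0"
  shows "c$j < \<theta>$j"
proof -
  have xs: "x \<in> std_simplex" using assms by (simp add: eqs_def)
  have cj: "c$j \<le> \<theta>$j" using c_bound[OF assms(1-4), of j] assms(5) by (simp add: evec_def)
  have "c$j = (\<Sum>k\<in>UNIV. M x $ j $ k * c$k) + evec i $ j" using assms(2) unfolding csol_def by blast
  then have "c$j = (\<Sum>k\<in>UNIV. M x $ j $ k * c$k)" using assms(5) by (simp add: evec_def)
  also have "\<dots> = \<theta>$j * (\<Sum>k\<in>UNIV. W x $ j $ k * c$k)" by (simp add: Mm_entry sum_distrib_left mult.assoc)
  finally have c_eq: "c$j = \<theta>$j * (\<Sum>k\<in>UNIV. W x $ j $ k * c$k)" .
  have "(\<Sum>k\<in>UNIV. W x $ j $ k * c$k) = (\<Sum>k\<in>UNIV. if k = j then x$j * c$j else 0) + (1 - x$j) * (\<Sum>k\<in>UNIV. C$j$k * c$k)"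
    by (simp add: W_entry distrib_right sum.distrib sum_distrib_left mult.assoc if_distrib[of "\<lambda>t. t * _"] cong: if_cong)
  also have "\<dots> \<le> x$j * c$j + (1 - x$j) * 1"
  proof -
    have "(\<Sum>k\<in>UNIV. C$j$k * c$k) \<le> (\<Sum>k\<in>UNIV. C$j$k)"
      by (rule sum_mono) (use assms(4) C_nonneg in \<open>auto intro: mult_left_le\<close>)
    then have "(1 - x$j) * (\<Sum>k\<in>UNIV. C$j$k * c$k) \<le> (1 - x$j) * 1"
      using C_rowsum eqs_lt1[OF assms(1), of j] by (intro mult_left_mono) auto
    then show ?thesis by simp
  qed
  also have "\<dots> < 1"
  proof -
    have "c$j < 1" using cj \<theta>_lt by (meson le_less_trans)
    then have "x$j * c$j < x$j" using eqs_pos(2)[OF assms(1), of j] by simp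
    then show ?thesis by simp
  qed
  finally have "(\<Sum>k\<in>UNIV. W x $ j $ k * c$k) < 1" .
  then show ?thesis using c_eq assms(6) by simp
qed

lemma sum_evec: "(\<Sum>j\<in>UNIV. evec i $ j) = 1 - \<theta>$i"
proof -
  have "(\<Sum>j\<in>UNIV. evec i $ j) = (\<Sum>j\<in>UNIV. if j = i then 1 - \<theta>$i else 0)"
    by (rule sum.cong) (auto simp: evec_def)
  then show ?thesis by simp
qed

lemma x_upper: assumes "eqs x"
  shows "x$i \<le> (1 + (\<Sum>j\<in>UNIV. \<theta>$j) - \<theta>$i) / real CARD('n)"
proof -
  obtain c where c: "csol x (evec i) c" "\<forall>j. 0 \<le> c$j" "\<forall>j. c$j \<le> 1"
    "x$i = (\<Sum>j\<in>UNIV. c$j) / real CARD('n)" using cvec[OF assms] by blast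
  have "(\<Sum>j\<in>UNIV. c$j) \<le> (\<Sum>j\<in>UNIV. \<theta>$j + evec i $ j)"
    by (rule sum_mono) (rule c_bound[OF assms c(1-3)])
  then have "(\<Sum>j\<in>UNIV. c$j) \<le> 1 + (\<Sum>j\<in>UNIV. \<theta>$j) - \<theta>$i" by (simp add: sum.distrib sum_evec)
  then show ?thesis using c(4) by (simp add: divide_right_mono)
qed

lemma x_strict: assumes "eqs x" "\<exists>j. \<theta>$j > 0"
  shows "x$i < 1 / real CARD('n) + theta_ave \<theta>"
proof -
  obtain c where c: "csol x (evec i) c" "\<forall>j. 0 \<le> c$j" "\<forall>j. c$j \<le> 1"
    "x$i = (\<Sum>j\<in>UNIV. c$j) / real CARD('n)" using cvec[OF assms(1)] by blast
  have le: "(\<Sum>j\<in>UNIV. c$j) \<le> (\<Sum>j\<in>UNIV. \<theta>$j + evec i $ j)"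
    by (rule sum_mono) (rule c_bound[OF assms(1) c(1-3)])
  have "(\<Sum>j\<in>UNIV. c$j) < 1 + (\<Sum>j\<in>UNIV. \<theta>$j)"
  proof (cases "\<theta>$i > 0")
    case True then show ?thesis using le by (simp add: sum.distrib sum_evec)
  next
    case False
    then have ti: "\<theta>$i = 0" using \<theta>_ge[rule_format, of i] by linarith
    obtain j where j: "\<theta>$j > 0" using assms(2) by blast
    then have ji: "j \<noteq> i" using ti by auto
    have "(\<Sum>j\<in>UNIV. c$j) < (\<Sum>j\<in>UNIV. \<theta>$j + evec i $ j)"
    proof (rule sum_strict_mono_ex1)
      show "\<forall>k\<in>UNIV. c$k \<le> \<theta>$k + evec i $ k" using c_bound[OF assms(1) c(1-3)] by blast
      show "\<exists>k\<in>UNIV. c$k < \<theta>$k + evec i $ k"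
        using c_strict[OF assms(1) c(1-3) ji j] ji by (auto simp: evec_def)
    qed simp
    then show ?thesis using ti by (simp add: sum.distrib sum_evec)
  qed
  then have "x$i < (1 + (\<Sum>j\<in>UNIV. \<theta>$j)) / real CARD('n)" using c(4) by (simp add: divide_strict_right_mono)
  then show ?thesis by (simp add: theta_ave_def add_divide_distrib)
qed

lemma props: assumes "eqs x" "\<exists>j. \<theta>$j > 0" shows "eq_power_props C \<theta> x"
proof -
  have "Max (range (\<lambda>i. x$i)) < 1 / real CARD('n) + theta_ave \<theta>"
    using x_strict[OF assms] by (subst Max_less_iff) auto
  moreover have "\<theta>$i > 0" if "\<theta>$i \<noteq> 0" for i using that \<theta>_ge[rule_format, of i] by linarith
  ultimately show ?thesis unfolding eq_power_props_def
    using prop_a[OF assms(1)] prop_b[OF assms(1)] prop_c[OF assms(1)] by blast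
qed


lemma coef_bound: assumes "eqs x"
  and H: "theta_max \<theta> < real CARD('n) /
             (real CARD('n) + 2 * (1 + (real CARD('n) * theta_ave \<theta> - theta_min \<theta>)))"
  shows "2 * \<theta>$k * (x$k / (1 - \<theta>$k)) < 1"
proof -
  define S where "S = (\<Sum>j\<in>UNIV. \<theta>$j)"
  define z where "z = S - theta_min \<theta>"
  have nz: "real CARD('n) * theta_ave \<theta> = S" by (simp add: theta_ave_def S_def)
  have tmin: "theta_min \<theta> \<le> \<theta>$k" unfolding theta_min_def by (rule Min_le) auto
  have tmax: "\<theta>$k \<le> theta_max \<theta>" unfolding theta_max_def by (rule Max_ge) auto
  have "\<theta>$k \<le> S" unfolding S_def by (rule member_le_sum) (use \<theta>_ge in auto)
  then have z0: "z \<ge> 0" using tmin by (simp add: z_def)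
  have npos: "real CARD('n) > 0" by simp
  have z2: "0 < 2 * (1 + z)" using z0 by simp
  have d: "real CARD('n) + 2 * (1 + z) > 0" using add_pos_pos[OF npos z2] .
  have "\<theta>$k < real CARD('n) / (real CARD('n) + 2 * (1 + z))" using H tmax nz by (simp add: z_def)
  then have A: "\<theta>$k * (real CARD('n) + 2 * (1 + z)) < real CARD('n)" using d by (simp add: field_simps)
  have xu: "x$k \<le> (1 + z) / real CARD('n)"
  proof -
    have "x$k \<le> (1 + S - \<theta>$k) / real CARD('n)" using x_upper[OF assms(1), of k] by (simp add: S_def)
    also have "\<dots> \<le> (1 + z) / real CARD('n)" using tmin by (simp add: z_def divide_right_mono)
    finally show ?thesis .
  qed
  have "2 * \<theta>$k * x$k \<le> 2 * \<theta>$k * ((1 + z) / real CARD('n))"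
    by (rule mult_left_mono[OF xu]) (use \<theta>_ge[rule_format, of k] in simp)
  also have "\<dots> < 1 - \<theta>$k"
  proof -
    have "2 * \<theta>$k * (1 + z) < real CARD('n) * (1 - \<theta>$k)" using A by (simp add: algebra_simps)
    then show ?thesis using npos by (simp add: field_simps)
  qed
  finally have "2 * \<theta>$k * x$k < 1 - \<theta>$k" .
  then show ?thesis using th1[of k] by (simp add: field_simps)
qed

lemma unique: assumes ex: "eqs x" and ey: "eqs y"
  and H: "theta_max \<theta> < real CARD('n) /
             (real CARD('n) + 2 * (1 + (real CARD('n) * theta_ave \<theta> - theta_min \<theta>)))"
  shows "x = y"
proof -
  have xs: "x \<in> std_simplex" using ex by (simp add: eqs_def)
  define z where "z k = x$k / (1 - \<theta>$k)" for k
  define z' where "z' k = y$k / (1 - \<theta>$k)" for k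
  define u where "u k = z k - z' k" for k
  define d where "d k = x$k - y$k" for k
  have z'0: "0 \<le> z' k" for k using simplex_le1(1)[of y k] ey th1[of k] by (simp add: eqs_def z'_def)
  define T where "T i k = \<theta>$k * W x $ k $ i * \<bar>u k\<bar> +
      \<theta>$k * \<bar>d k\<bar> * ((if k = i then 1 else 0) + C$k$i) * z' k" for i k
  have Wd: "W x $ k $ i - W y $ k $ i = d k * ((if k = i then 1 else 0) - C$k$i)" for k i
    by (simp add: W_entry d_def algebra_simps)
  have ui: "\<bar>u i\<bar> \<le> (\<Sum>k\<in>UNIV. T i k)" for i
  proof -
    have "u i = (\<Sum>k\<in>UNIV. \<theta>$k * W x $ k $ i * z k) - (\<Sum>k\<in>UNIV. \<theta>$k * W y $ k $ i * z' k)"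
      using eqs_entry[OF ex, of i] eqs_entry[OF ey, of i] by (simp add: u_def z_def z'_def)
    also have "\<dots> = (\<Sum>k\<in>UNIV. \<theta>$k * W x $ k $ i * u k + \<theta>$k * (W x $ k $ i - W y $ k $ i) * z' k)"
      by (simp add: sum_subtractf[symmetric] u_def algebra_simps)
    finally have "\<bar>u i\<bar> \<le> (\<Sum>k\<in>UNIV. \<bar>\<theta>$k * W x $ k $ i * u k + \<theta>$k * (W x $ k $ i - W y $ k $ i) * z' k\<bar>)"
      by (simp add: sum_abs)
    also have "\<dots> \<le> (\<Sum>k\<in>UNIV. T i k)"
    proof (rule sum_mono)
      fix k :: 'n assume "k \<in> UNIV"
      have w0: "0 \<le> W x $ k $ i" using W_nonneg[OF C_rs simplex_le1[OF xs]] .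
      have t0: "0 \<le> \<theta>$k" using \<theta>_ge by auto
      have c0: "0 \<le> C$k$i" by (rule C_nonneg)
      have e1: "\<bar>\<theta>$k * W x $ k $ i * u k\<bar> = \<theta>$k * W x $ k $ i * \<bar>u k\<bar>"
        using w0 t0 by (simp add: abs_mult)
      have "\<bar>(if k = i then 1 else 0) - C$k$i\<bar> \<le> (if k = i then 1 else 0) + C$k$i" using c0 by auto
      then have "\<bar>\<theta>$k * (W x $ k $ i - W y $ k $ i) * z' k\<bar> \<le>
          \<theta>$k * \<bar>d k\<bar> * ((if k = i then 1 else 0) + C$k$i) * z' k"
        using t0 z'0[of k] by (simp add: Wd abs_mult mult_left_mono mult_right_mono mult.assoc)
      then show "\<bar>\<theta>$k * W x $ k $ i * u k + \<theta>$k * (W x $ k $ i - W y $ k $ i) * z' k\<bar> \<le> T i k"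
        unfolding T_def using e1 abs_triangle_ineq by (smt (verit))
    qed
    finally show ?thesis .
  qed
  have "(\<Sum>i\<in>UNIV. \<bar>u i\<bar>) \<le> (\<Sum>i\<in>UNIV. \<Sum>k\<in>UNIV. T i k)" by (rule sum_mono) (rule ui)
  also have "\<dots> = (\<Sum>k\<in>UNIV. \<Sum>i\<in>UNIV. T i k)" by (rule sum.swap)
  also have "\<dots> = (\<Sum>k\<in>UNIV. \<theta>$k * \<bar>u k\<bar> + 2 * \<theta>$k * \<bar>d k\<bar> * z' k)"
  proof (rule sum.cong)
    fix k :: 'n assume "k \<in> UNIV"
    have s1: "(\<Sum>i\<in>UNIV. W x $ k $ i) = 1" by (rule W_rowsum[OF C_rs])
    have s2: "(\<Sum>i\<in>UNIV. (if k = i then 1 else 0) + C$k$i) = (2::real)"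
      by (simp add: sum.distrib C_rowsum)
    have h1: "(\<Sum>i\<in>UNIV. \<theta>$k * W x $ k $ i * \<bar>u k\<bar>) = \<theta>$k * \<bar>u k\<bar> * (\<Sum>i\<in>UNIV. W x $ k $ i)"
      by (simp add: sum_distrib_left mult_ac)
    have h2: "(\<Sum>i\<in>UNIV. \<theta>$k * \<bar>d k\<bar> * ((if k = i then 1 else 0) + C$k$i) * z' k) =
        \<theta>$k * \<bar>d k\<bar> * z' k * (\<Sum>i\<in>UNIV. (if k = i then 1 else 0) + C$k$i)"
      by (simp only: sum_distrib_left mult_ac)
    show "(\<Sum>i\<in>UNIV. T i k) = \<theta>$k * \<bar>u k\<bar> + 2 * \<theta>$k * \<bar>d k\<bar> * z' k"
      unfolding T_def sum.distrib h1 h2 s1 using s2 by (simp add: C_rowsum)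
  qed simp
  finally have L: "(\<Sum>k\<in>UNIV. \<bar>u k\<bar> - \<theta>$k * \<bar>u k\<bar> - 2 * \<theta>$k * \<bar>d k\<bar> * z' k) \<le> 0"
    by (simp add: sum_subtractf sum.distrib)
  have ud: "\<bar>u k\<bar> - \<theta>$k * \<bar>u k\<bar> = \<bar>d k\<bar>" for k
  proof -
    have t: "0 < 1 - \<theta>$k" by (rule th1)
    have "(1 - \<theta>$k) * u k = d k" using t by (simp add: u_def z_def z'_def d_def right_diff_distrib)
    then have "\<bar>d k\<bar> = (1 - \<theta>$k) * \<bar>u k\<bar>" using t by (metis abs_mult abs_of_pos)
    then show ?thesis by (simp add: algebra_simps)
  qed
  define g where "g k = \<bar>d k\<bar> * (1 - 2 * \<theta>$k * z' k)" for k
  have gpos: "0 < 1 - 2 * \<theta>$k * z' k" for k using coef_bound[OF ey H, of k] by (simp add: z'_def)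
  have g0: "0 \<le> g k" for k using gpos[of k] by (simp add: g_def)
  have "(\<Sum>k\<in>UNIV. g k) \<le> 0" using L by (simp add: g_def ud[symmetric] algebra_simps)
  moreover have "0 \<le> (\<Sum>k\<in>UNIV. g k)" by (rule sum_nonneg) (rule g0)
  ultimately have "(\<Sum>k\<in>UNIV. g k) = 0" by linarith
  then have "\<forall>k. g k = 0" using g0 by (subst (asm) sum_nonneg_eq_0_iff) auto
  then have "\<forall>k. d k = 0" using gpos by (simp add: g_def) (metis less_irrefl)
  then show ?thesis by (simp add: vec_eq_iff d_def)
qed


lemma cont_det: assumes "\<And>i j. continuous_on S (\<lambda>x. F x $ i $ j)"
  shows "continuous_on S (\<lambda>x. det (F x :: real^'m^'m))"
  unfolding det_def by (intro continuous_intros assms)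

lemma A_entry: "transpose (mat 1 - M x) $ i $ j = (if i = j then 1 else 0) - \<theta>$j * W x $ j $ i"
  by (simp add: transpose_def mat1_entry Mm_entry)

lemma A_cont: "continuous_on S (\<lambda>x. transpose (mat 1 - M x) $ i $ j)"
  by (cases "i = j") (auto simp: A_entry W_entry intro!: continuous_intros)

lemma B_cont: "continuous_on S (\<lambda>x. (\<chi> i j. if j = k then bvec $ i else transpose (mat 1 - M x) $ i $ j) $ i $ j)"
  by (cases "j = k") (auto intro!: continuous_intros A_cont)

lemma Fmap_cramer: assumes "x \<in> std_simplex"
  shows "Fmap C \<theta> x = (\<chi> k. (1 - \<theta>$k) * (det (\<chi> i j. if j = k then bvec $ i else transpose (mat 1 - M x) $ i $ j) / det (transpose (mat 1 - M x))))"
proof -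
  let ?A = "transpose (mat 1 - M x)"
  have d: "det ?A \<noteq> 0" using IMT_invertible[OF assms] invertible_det_nz by blast
  have "?A *v (matrix_inv ?A *v bvec) = bvec"
    unfolding matrix_vector_mul_assoc inv_props(1)[OF IMT_invertible[OF assms]] by simp
  then have y: "matrix_inv ?A *v bvec = (\<chi> k. det (\<chi> i j. if j = k then bvec $ i else ?A $ i $ j) / det ?A)"
    using cramer[OF d] by blast
  show ?thesis unfolding Fmap_alt y by (simp add: vec_eq_iff one_minus_diag diag_mv_entry)
qed

lemma Fmap_cont: "continuous_on std_simplex (Fmap C \<theta>)"
proof -
  have "continuous_on std_simplex (\<lambda>x. (\<chi> k. (1 - \<theta>$k) * (det (\<chi> i j. if j = k then bvec $ i else transpose (mat 1 - M x) $ i $ j) / det (transpose (mat 1 - M x)))))"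
    by (intro continuous_intros cont_det A_cont B_cont)
      (use IMT_invertible invertible_det_nz in blast)
  then show ?thesis by (rule continuous_on_cong[THEN iffD1, rotated 2]) (auto simp: Fmap_cramer)
qed

lemma Fmap_into: assumes "x \<in> std_simplex" shows "Fmap C \<theta> x \<in> std_simplex"
proof -
  let ?A = "transpose (mat 1 - M x)"
  define y where "y = matrix_inv ?A *v bvec"
  have Ay: "?A *v y = bvec"
    unfolding y_def matrix_vector_mul_assoc inv_props(1)[OF IMT_invertible[OF assms]] by simp
  have F: "Fmap C \<theta> x $ j = (1 - \<theta>$j) * y$j" for j
    by (simp add: Fmap_alt y_def[symmetric] one_minus_diag diag_mv_entry)
  have "0 \<le> (1 - \<theta>$i) * y$i" for i
  proof -
    have cs: "csol x (evec i) (matrix_inv (mat 1 - M x) *v evec i)" by (rule csol_exists[OF assms])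
    have "0 \<le> (matrix_inv (mat 1 - M x) *v evec i) $ j" for j
      by (rule csol_nonneg[OF assms cs]) (use \<theta>_lt in \<open>auto simp: evec_def less_imp_le\<close>)
    then show ?thesis using ycomp[OF Ay cs] by (simp add: sum_nonneg)
  qed
  then show ?thesis using ysum[OF Ay] F by (simp add: std_simplex_def)
qed

lemma simplex_compact: "compact (std_simplex :: (real^'n) set)"
proof -
  have cl: "closed (std_simplex :: (real^'n) set)"
  proof -
    have e: "std_simplex = (\<Inter>i. {x::real^'n. 0 \<le> x$i}) \<inter> {x. (\<Sum>i\<in>UNIV. x$i) = 1}"
      by (auto simp: std_simplex_def)
    have c1: "closed {x::real^'n. (\<Sum>i\<in>UNIV. x$i) = 1}"
      by (intro closed_Collect_eq continuous_intros)
    have c2: "closed {x::real^'n. 0 \<le> x$i}" for i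
      by (intro closed_Collect_le continuous_intros)
    show ?thesis unfolding e by (intro closed_Int closed_INT c1 ballI c2)
  qed
  have "std_simplex \<subseteq> cbox (0::real^'n) ones_vec"
    by (auto simp: mem_box_cart ones_vec_def intro: simplex_le1)
  then have "bounded (std_simplex :: (real^'n) set)" using bounded_cbox bounded_subset by blast
  then show ?thesis using cl by (simp add: compact_eq_bounded_closed)
qed

lemma simplex_convex: "convex (std_simplex :: (real^'n) set)"
  unfolding convex_def std_simplex_def
  by (auto simp: sum.distrib sum_distrib_left[symmetric])

lemma bvec_simplex: "bvec \<in> std_simplex"
  by (simp add: std_simplex_def bvec_entry)

lemma existsA: "\<exists>x. equilibrium_A C \<theta> x"
proof -
  obtain x where "x \<in> std_simplex" "Fmap C \<theta> x = x"
    by (rule brouwer[OF simplex_compact simplex_convex _ Fmap_cont]) (use bvec_simplex Fmap_into in auto)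
  then show ?thesis by (auto simp: equilibrium_A_def)
qed

lemma existsB: assumes "equilibrium_A C \<theta> x" shows "\<exists>V. equilibrium_B C \<theta> V x"
proof -
  have xs: "x \<in> std_simplex" using assms by (simp add: equilibrium_A_def)
  let ?I = "mat 1 - M x"
  let ?D = "mat 1 - diag_mat \<theta>"
  define V where "V = matrix_inv ?I ** ?D"
  have inv1: "?I ** matrix_inv ?I = mat 1" by (rule inv_props(1)[OF IM_invertible[OF xs]])
  have IV: "?I ** V = ?D" unfolding V_def matrix_mul_assoc inv1 by simp
  then have "V - M x ** V = ?D" by (simp add: matrix_diff_rdistrib)
  then have Veq: "V = diag_mat \<theta> ** Wmat C x ** V + mat 1 - diag_mat \<theta>"
    by (simp add: Mm_def algebra_simps)
  have Vcol: "V $ j $ i = (matrix_inv ?I *v evec i) $ j" for i j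
  proof -
    have "?D $ k $ i = evec i $ k" for k by (auto simp: evec_def mat1_entry diag_mat_def)
    then show ?thesis by (simp add: V_def matrix_matrix_mult_def mv_entry)
  qed
  have V0: "0 \<le> V $ j $ i" for i j
    unfolding Vcol by (rule csol_nonneg[OF xs csol_exists[OF xs]]) (use \<theta>_lt in \<open>auto simp: evec_def less_imp_le\<close>)
  have "V *v ones_vec = matrix_inv ?I *v (?D *v ones_vec)" by (simp add: V_def matrix_vector_mul_assoc)
  also have "?D *v ones_vec = (\<chi> j. 1 - \<theta>$j)" by (simp add: vec_eq_iff one_minus_diag diag_mv_entry ones_vec_def)
  finally have VO: "V *v ones_vec = ones_vec"
    using csol_unique[OF xs csol_exists[OF xs] csol_ones] by simp
  have Vs: "(\<Sum>i\<in>UNIV. V $ j $ i) = 1" for j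
  proof -
    have "(V *v ones_vec)$j = ones_vec$j" by (simp only: VO)
    then show ?thesis by (simp add: mv_entry ones_vec_def)
  qed
  let ?A = "transpose ?I"
  have inv2: "?A ** matrix_inv ?A = mat 1" by (rule inv_props(1)[OF IMT_invertible[OF xs]])
  have P: "transpose (matrix_inv ?I) ** ?A = mat 1"
    by (metis inv1 matrix_transpose_mul transpose_mat)
  have PQ: "transpose (matrix_inv ?I) = matrix_inv ?A"
    by (metis P inv2 matrix_mul_assoc matrix_mul_lid matrix_mul_rid)
  have "transpose V = ?D ** matrix_inv ?A" by (simp add: V_def matrix_transpose_mul transpose_ID PQ)
  then have "transpose V *v bvec = Fmap C \<theta> x"
    by (simp add: Fmap_alt matrix_vector_mul_assoc)
  then have xV: "x = transpose V *v ((1 / real CARD('n)) *\<^sub>R ones_vec)"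
    using assms by (simp add: equilibrium_A_def bvec_def)
  show ?thesis unfolding equilibrium_B_def row_stochastic_def
    using V0 Vs xs Veq xV by blast
qed

end

theorem theorem1:
  fixes C :: "real^'n^'n" and \<theta> :: "real^'n"
  assumes n2: "CARD('n) \<ge> 2"
    and C_rs: "row_stochastic C" and C_zd: "zero_diag C"
    and \<theta>_ge: "\<forall>i. 0 \<le> \<theta> $ i" and \<theta>_lt: "\<forall>i. \<theta> $ i < 1"
    and \<theta>_pos: "\<exists>j. \<theta> $ j > 0"
  shows "(\<exists>x. equilibrium_A C \<theta> x) \<and> (\<exists>V x. equilibrium_B C \<theta> V x) \<and>
         (\<forall>x. equilibrium_A C \<theta> x \<longrightarrow> eq_power_props C \<theta> x) \<and>
         (\<forall>V x. equilibrium_B C \<theta> V x \<longrightarrow> eq_power_props C \<theta> x) \<and>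
         (theta_max \<theta> < real CARD('n) /
             (real CARD('n) + 2 * (1 + (real CARD('n) * theta_ave \<theta> - theta_min \<theta>))) \<longrightarrow>
            (\<forall>x y. equilibrium_A C \<theta> x \<longrightarrow> equilibrium_A C \<theta> y \<longrightarrow> x = y) \<and>
            (\<forall>V x W y. equilibrium_B C \<theta> V x \<longrightarrow> equilibrium_B C \<theta> W y \<longrightarrow> x = y))"
proof -
  interpret sp C \<theta> using n2 C_rs C_zd \<theta>_ge \<theta>_lt by unfold_locales
  obtain x where xA: "equilibrium_A C \<theta> x" using existsA by blast
  obtain V where "equilibrium_B C \<theta> V x" using existsB[OF xA] by blast
  then have E2: "\<exists>V x. equilibrium_B C \<theta> V x" by blast
  have P1: "\<forall>x. equilibrium_A C \<theta> x \<longrightarrow> eq_power_props C \<theta> x"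
    using eqA_eqs props \<theta>_pos by blast
  have P2: "\<forall>V x. equilibrium_B C \<theta> V x \<longrightarrow> eq_power_props C \<theta> x"
    using eqB_eqs props \<theta>_pos by blast
  have U: "(\<forall>x y. equilibrium_A C \<theta> x \<longrightarrow> equilibrium_A C \<theta> y \<longrightarrow> x = y) \<and>
            (\<forall>V x W y. equilibrium_B C \<theta> V x \<longrightarrow> equilibrium_B C \<theta> W y \<longrightarrow> x = y)"
    if H: "theta_max \<theta> < real CARD('n) /
             (real CARD('n) + 2 * (1 + (real CARD('n) * theta_ave \<theta> - theta_min \<theta>)))"
    using unique[OF _ _ H] eqA_eqs eqB_eqs by blast
  show ?thesis using xA E2 P1 P2 U by blast
qed

end
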